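(* Let $\mathbb P$ be atomless, $\Lambda\in\mathcal H_I$, and $\overline{\mathbb Q}=\sup_{\mathbb Q\in\mathcal P(\mathbb P,Y_1,Y_2)}\mathbb Q$ (setwise supremum). (i) If $Y_1=0$ and $Y_2$ is nonnegative with $1<\mathbb E^{\mathbb P}(Y_2)<\infty$, then $\overline{\mathbb Q}(A)=1\wedge\mathbb E^{\mathbb P}(Y_2\mathds 1_A)$ for all $A\in\mathcal F$ and $\sup_{\mathbb Q\in\mathcal P(\mathbb P,0,Y_2)}\Lambda\mathrm{VaR}^{\mathbb Q}=\Lambda\mathrm{VaR}^{\overline{\mathbb Q}}$. (ii) If $Y_1=k_1$ and $Y_2=k_2$ are constants with $0\le k_1<1<k_2$, then $\overline{\mathbb Q}(A)=g(\mathbb P(A))$ for all $A\in\mathcal F$ with $g(x)=(k_2x)\wedge(k_1x+1-k_1)$, $x\in[0,1]$, and $\sup_{\mathbb Q\in\mathcal P(\mathbb P,k_1,k_2)}\Lambda\mathrm{VaR}^{\mathbb Q}=(g^{-1}\circ\Lambda)\mathrm{VaR}^{\mathbb P}$.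
   Context: $\mathcal P(\mathbb P,Y_1,Y_2)=\{\mathbb Q\ll\mathbb P: Y_1\le\mathrm d\mathbb Q/\mathrm d\mathbb P\le Y_2\}$. For a capacity $w$ (monotone $w:\mathcal F\to[0,1]$, $w(\emptyset)=0,w(\Omega)=1$) and $\Lambda:\mathbb R\to[0,1]$, $\Lambda\mathrm{VaR}^w(X)=\inf\{x\in\mathbb R:w(X>x)\le\Lambda(x)\}$ ($\inf\emptyset=\infty$). $\mathcal H_I$: increasing functions $\mathbb R\to(0,1)$. In (ii), $g$ is continuous and strictly increasing on the set where $g<1$, and $g^{-1}:(0,1)\to(0,1)$ denotes the inverse there, so $g^{-1}\circ\Lambda$ is well defined. *)

theory Defs
  imports "HOL-Probability.Probability"
begin

definition atomless :: "'a measure \<Rightarrow> bool" where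
  "atomless M \<longleftrightarrow> (\<forall>A\<in>sets M. measure M A > 0 \<longrightarrow>
      (\<exists>B\<in>sets M. B \<subseteq> A \<and> 0 < measure M B \<and> measure M B < measure M A))"

definition H_I :: "(real \<Rightarrow> real) set" where
  "H_I = {L. mono L \<and> (\<forall>x. 0 < L x \<and> L x < 1)}"

definition Pset :: "'a measure \<Rightarrow> ('a \<Rightarrow> real) \<Rightarrow> ('a \<Rightarrow> real) \<Rightarrow> 'a measure set" where
  "Pset M Y1 Y2 = {Q. prob_space Q \<and> sets Q = sets M \<and> absolutely_continuous M Q \<and>
      (AE x in M. ennreal (Y1 x) \<le> RN_deriv M Q x \<and> RN_deriv M Q x \<le> ennreal (Y2 x))}"

definition setsup :: "'a measure set \<Rightarrow> 'a set \<Rightarrow> real" where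
  "setsup \<Q> A = (SUP Q\<in>\<Q>. measure Q A)"

text \<open>Lambda-VaR with respect to a capacity w on the sample space \<Omega>;
  inf of the empty set is +\<infinity>.\<close>
definition LVaR :: "'a set \<Rightarrow> ('a set \<Rightarrow> real) \<Rightarrow> (real \<Rightarrow> real) \<Rightarrow> ('a \<Rightarrow> real) \<Rightarrow> ereal" where
  "LVaR \<Omega> w L X = Inf {ereal x | x. w {\<omega>\<in>\<Omega>. X \<omega> > x} \<le> L x}"

definition gfun :: "real \<Rightarrow> real \<Rightarrow> real \<Rightarrow> real" where
  "gfun k1 k2 x = min (k2 * x) (k1 * x + 1 - k1)"

definition ginv :: "real \<Rightarrow> real \<Rightarrow> real \<Rightarrow> real" where
  "ginv k1 k2 y = (THE x. 0 \<le> x \<and> x \<le> 1 \<and> gfun k1 k2 x < 1 \<and> gfun k1 k2 x = y)"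

end

theory Submission
  imports Defs
begin

lemma dens_Pset:
  assumes M: "prob_space M" and f: "f \<in> borel_measurable M" and fi: "integrable M f"
    and bnd: "\<And>x. x \<in> space M \<Longrightarrow> 0 \<le> f x \<and> Y1 x \<le> f x \<and> f x \<le> Y2 x"
    and one: "integral\<^sup>L M f = 1"
  shows "density M (\<lambda>x. ennreal (f x)) \<in> Pset M Y1 Y2"
    and "\<And>A. A \<in> sets M \<Longrightarrow> measure (density M (\<lambda>x. ennreal (f x))) A = (LINT x:A|M. f x)"
proof -
  interpret prob_space M by fact
  let ?N = "density M (\<lambda>x. ennreal (f x))"
  have em: "emeasure ?N A = ennreal (LINT x:A|M. f x)" if A: "A \<in> sets M" for A
    using A f fi bnd by (simp add: emeasure_density nn_set_integral_eq_set_integral)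
  have "emeasure ?N (space ?N) = 1"
    using em[of "space M"] one fi by (simp add: set_integral_space)
  then have ps: "prob_space ?N" by (rule prob_spaceI)
  have ae: "AE x in M. ennreal (f x) = RN_deriv M ?N x"
    by (rule RN_deriv_unique) (use f in auto)
  have "AE x in M. ennreal (Y1 x) \<le> RN_deriv M ?N x \<and> RN_deriv M ?N x \<le> ennreal (Y2 x)"
    using ae AE_space
  proof eventually_elim
    case (elim x)
    then show ?case using bnd[of x] by (metis ennreal_leI)
  qed
  then show "?N \<in> Pset M Y1 Y2"
    unfolding Pset_def using ps f by (auto intro!: absolutely_continuousI_density)
  fix A assume A: "A \<in> sets M"
  have "0 \<le> (LINT x:A|M. f x)"
    using bnd unfolding set_lebesgue_integral_def by (intro Bochner_Integration.integral_nonneg) (auto simp: indicator_def)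
  then show "measure ?N A = (LINT x:A|M. f x)"
    using em[OF A] by (simp add: measure_def)
qed

lemma Pset_bounds:
  assumes M: "prob_space M" and Q: "Q \<in> Pset M Y1 Y2" and A: "A \<in> sets M"
  shows "(\<integral>\<^sup>+x\<in>A. ennreal (Y1 x) \<partial>M) \<le> emeasure Q A"
    and "emeasure Q A \<le> (\<integral>\<^sup>+x\<in>A. ennreal (Y2 x) \<partial>M)"
proof -
  interpret prob_space M by fact
  from Q have ac: "absolutely_continuous M Q" and s: "sets Q = sets M"
    and ae: "AE x in M. ennreal (Y1 x) \<le> RN_deriv M Q x \<and> RN_deriv M Q x \<le> ennreal (Y2 x)"
    by (auto simp: Pset_def)
  have eq: "emeasure Q A = (\<integral>\<^sup>+x\<in>A. RN_deriv M Q x \<partial>M)"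
    using density_RN_deriv[OF ac s] A by (metis emeasure_density borel_measurable_RN_deriv)
  show "(\<integral>\<^sup>+x\<in>A. ennreal (Y1 x) \<partial>M) \<le> emeasure Q A"
    unfolding eq by (rule nn_integral_mono_AE) (use ae in \<open>eventually_elim, auto simp: indicator_def\<close>)
  show "emeasure Q A \<le> (\<integral>\<^sup>+x\<in>A. ennreal (Y2 x) \<partial>M)"
    unfolding eq by (rule nn_integral_mono_AE) (use ae in \<open>eventually_elim, auto simp: indicator_def\<close>)
qed

lemma LVaR_sup:
  fixes w :: "'q \<Rightarrow> 'a set \<Rightarrow> real" and W :: "'a set \<Rightarrow> real"
  assumes ne: "Qs \<noteq> {}" and L: "mono L"
  and le: "\<And>Q x. Q\<in>Qs \<Longrightarrow> w Q {\<omega>\<in>\<Omega>. X \<omega> > x} \<le> W {\<omega>\<in>\<Omega>. X \<omega> > x}"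
  and att: "\<And>x. \<exists>Q\<in>Qs. w Q {\<omega>\<in>\<Omega>. X \<omega> > x} = W {\<omega>\<in>\<Omega>. X \<omega> > x}"
  and wmono: "\<And>Q x y. Q\<in>Qs \<Longrightarrow> x \<le> y \<Longrightarrow> w Q {\<omega>\<in>\<Omega>. X \<omega> > y} \<le> w Q {\<omega>\<in>\<Omega>. X \<omega> > x}"
  shows "(SUP Q\<in>Qs. LVaR \<Omega> (w Q) L X) = LVaR \<Omega> W L X"
proof (rule antisym)
  show "(SUP Q\<in>Qs. LVaR \<Omega> (w Q) L X) \<le> LVaR \<Omega> W L X"
  proof (rule SUP_least)
    fix Q assume Q: "Q \<in> Qs"
    show "LVaR \<Omega> (w Q) L X \<le> LVaR \<Omega> W L X"
      unfolding LVaR_def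
      by (rule Inf_superset_mono) (use le[OF Q] in \<open>force intro: order_trans\<close>)
  qed
next
  show "LVaR \<Omega> W L X \<le> (SUP Q\<in>Qs. LVaR \<Omega> (w Q) L X)"
  proof (rule dense_le)
    fix y assume y: "y < LVaR \<Omega> W L X"
    show "y \<le> (SUP Q\<in>Qs. LVaR \<Omega> (w Q) L X)"
    proof (cases y)
      case (real r)
      have nW: "\<not> W {\<omega>\<in>\<Omega>. X \<omega> > r} \<le> L r"
      proof
        assume "W {\<omega>\<in>\<Omega>. X \<omega> > r} \<le> L r"
        then have "LVaR \<Omega> W L X \<le> ereal r"
          unfolding LVaR_def by (intro Inf_lower) auto
        with y real show False by simp
      qed
      obtain Q where Q: "Q \<in> Qs" and wQ: "w Q {\<omega>\<in>\<Omega>. X \<omega> > r} = W {\<omega>\<in>\<Omega>. X \<omega> > r}"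
        using att by blast
      have "ereal r \<le> LVaR \<Omega> (w Q) L X"
        unfolding LVaR_def
      proof (rule Inf_greatest)
        fix z assume "z \<in> {ereal x |x. w Q {\<omega> \<in> \<Omega>. x < X \<omega>} \<le> L x}"
        then obtain x where z: "z = ereal x" and wx: "w Q {\<omega> \<in> \<Omega>. x < X \<omega>} \<le> L x" by blast
        have "r \<le> x"
        proof (rule ccontr)
          assume "\<not> r \<le> x"
          then have xr: "x \<le> r" by simp
          have "w Q {\<omega>\<in>\<Omega>. X \<omega> > r} \<le> w Q {\<omega>\<in>\<Omega>. X \<omega> > x}" by (rule wmono[OF Q xr])
          moreover have "L x \<le> L r" using L xr by (rule monoD)
          ultimately show False using wx wQ nW by linarith
        qed
        then show "ereal r \<le> z" using z by simp
      qed
      also have "\<dots> \<le> (SUP Q\<in>Qs. LVaR \<Omega> (w Q) L X)" using Q by (rule SUP_upper)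
      finally show ?thesis using real by simp
    next
      case PInf with y show ?thesis by simp
    next
      case MInf then show ?thesis by simp
    qed
  qed
qed

lemma attain:
  assumes M: "prob_space M" and Y: "Y \<in> borel_measurable M" "integrable M Y" and A: "A \<in> sets M"
    and inA: "\<And>x. x \<in> space M \<Longrightarrow> x \<in> A \<Longrightarrow> 0 \<le> \<alpha> * Y x \<and> Y1 x \<le> \<alpha> * Y x \<and> \<alpha> * Y x \<le> Y2 x"
    and outA: "\<And>x. x \<in> space M \<Longrightarrow> x \<notin> A \<Longrightarrow> 0 \<le> \<beta> * Y x \<and> Y1 x \<le> \<beta> * Y x \<and> \<beta> * Y x \<le> Y2 x"
    and tot: "\<alpha> * (LINT x:A|M. Y x) + \<beta> * (integral\<^sup>L M Y - (LINT x:A|M. Y x)) = 1"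
  shows "\<exists>Q\<in>Pset M Y1 Y2. measure Q A = \<alpha> * (LINT x:A|M. Y x)"
proof -
  define f where "f x = \<alpha> * (indicator A x * Y x) + \<beta> * (Y x - indicator A x * Y x)" for x
  have iA: "integrable M (\<lambda>x. indicator A x * Y x)"
    using integrable_mult_indicator[OF A Y(2)] by simp
  have fm: "f \<in> borel_measurable M" unfolding f_def using Y A by measurable
  have fi: "integrable M f" unfolding f_def using iA Y by auto
  have sA: "(LINT x:A|M. Y x) = integral\<^sup>L M (\<lambda>x. indicator A x * Y x)"
    by (simp add: set_lebesgue_integral_def)
  have intf: "integral\<^sup>L M f = 1"
    unfolding f_def using iA Y tot sA by simp
  have bnd: "0 \<le> f x \<and> Y1 x \<le> f x \<and> f x \<le> Y2 x" if "x \<in> space M" for x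
    using inA[OF that] outA[OF that] by (cases "x \<in> A") (auto simp: f_def)
  have "(LINT x:A|M. f x) = integral\<^sup>L M (\<lambda>x. \<alpha> * (indicator A x * Y x))"
    unfolding set_lebesgue_integral_def f_def
    by (rule Bochner_Integration.integral_cong) (auto simp: indicator_def)
  also have "\<dots> = \<alpha> * (LINT x:A|M. Y x)" using sA by simp
  finally have "(LINT x:A|M. f x) = \<alpha> * (LINT x:A|M. Y x)" .
  then show ?thesis
    using dens_Pset[OF M fm fi bnd intf] A by metis
qed

lemma setsup_max:
  assumes "\<forall>Q\<in>Qs. measure Q A \<le> b" "\<exists>Q\<in>Qs. measure Q A = b"
  shows "setsup Qs A = b"
  unfolding setsup_def using assms by (intro cSup_eq_maximum) auto

lemma LVaR_Pset:
  assumes M: "prob_space M"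
    and mx: "\<And>A. A \<in> sets M \<Longrightarrow> (\<forall>Q\<in>Pset M Y1 Y2. measure Q A \<le> b A) \<and> (\<exists>Q\<in>Pset M Y1 Y2. measure Q A = b A)"
    and X: "X \<in> borel_measurable M" and L: "mono L"
  shows "(SUP Q\<in>Pset M Y1 Y2. LVaR (space M) (measure Q) L X) = LVaR (space M) (setsup (Pset M Y1 Y2)) L X"
proof (rule LVaR_sup[OF _ L])
  have S: "{\<omega>\<in>space M. X \<omega> > x} \<in> sets M" for x using X by measurable
  have sb: "setsup (Pset M Y1 Y2) {\<omega>\<in>space M. X \<omega> > x} = b {\<omega>\<in>space M. X \<omega> > x}" for x
    using mx[OF S] by (intro setsup_max) auto
  show "Pset M Y1 Y2 \<noteq> {}" using mx[of "space M"] by auto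
  show "measure Q {\<omega>\<in>space M. X \<omega> > x} \<le> setsup (Pset M Y1 Y2) {\<omega>\<in>space M. X \<omega> > x}"
    if "Q \<in> Pset M Y1 Y2" for Q x using mx[OF S] that sb by auto
  show "\<exists>Q\<in>Pset M Y1 Y2. measure Q {\<omega>\<in>space M. X \<omega> > x} = setsup (Pset M Y1 Y2) {\<omega>\<in>space M. X \<omega> > x}"
    for x using mx[OF S] sb by auto
  show "measure Q {\<omega>\<in>space M. X \<omega> > y} \<le> measure Q {\<omega>\<in>space M. X \<omega> > x}"
    if Q: "Q \<in> Pset M Y1 Y2" and xy: "x \<le> y" for Q x y
  proof -
    interpret Q: prob_space Q using Q by (auto simp: Pset_def)
    have "sets Q = sets M" using Q by (auto simp: Pset_def)
    then show ?thesis using S[of x] xy by (intro Q.finite_measure_mono) auto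
  qed
qed

lemma max_i:
  assumes M: "prob_space M" and Y: "Y2 \<in> borel_measurable M" "\<forall>x\<in>space M. 0 \<le> Y2 x"
    "integrable M Y2" "1 < integral\<^sup>L M Y2" and A: "A \<in> sets M"
  shows "(\<forall>Q\<in>Pset M (\<lambda>_. 0) Y2. measure Q A \<le> min 1 (LINT x:A|M. Y2 x)) \<and>
         (\<exists>Q\<in>Pset M (\<lambda>_. 0) Y2. measure Q A = min 1 (LINT x:A|M. Y2 x))"
proof
  define a where "a = (LINT x:A|M. Y2 x)"
  define E where "E = integral\<^sup>L M Y2"
  have a0: "0 \<le> a" unfolding a_def set_lebesgue_integral_def
    using Y by (intro Bochner_Integration.integral_nonneg) (auto simp: indicator_def)
  have ennA: "(\<integral>\<^sup>+x\<in>A. ennreal (Y2 x) \<partial>M) = ennreal a"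
    unfolding a_def using Y A by (intro nn_set_integral_eq_set_integral) auto
  show "\<forall>Q\<in>Pset M (\<lambda>_. 0) Y2. measure Q A \<le> min 1 (LINT x:A|M. Y2 x)"
  proof
    fix Q assume Q: "Q \<in> Pset M (\<lambda>_. 0) Y2"
    interpret Q: prob_space Q using Q by (auto simp: Pset_def)
    have "emeasure Q A \<le> ennreal a" using Pset_bounds(2)[OF M Q A] ennA by simp
    then have "measure Q A \<le> a" using a0 by (simp add: Q.emeasure_eq_measure)
    moreover have "measure Q A \<le> 1" by (rule Q.prob_le_1)
    ultimately show "measure Q A \<le> min 1 (LINT x:A|M. Y2 x)" unfolding a_def by simp
  qed
  show "\<exists>Q\<in>Pset M (\<lambda>_. 0) Y2. measure Q A = min 1 (LINT x:A|M. Y2 x)"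
  proof (cases "1 \<le> a")
    case True
    have "\<exists>Q\<in>Pset M (\<lambda>_. 0) Y2. measure Q A = (1/a) * a"
      unfolding a_def
    proof (rule attain[OF M Y(1) Y(3) A])
      show "0 \<le> 1 / (LINT x:A|M. Y2 x) * Y2 x \<and> 0 \<le> 1 / (LINT x:A|M. Y2 x) * Y2 x \<and> 1 / (LINT x:A|M. Y2 x) * Y2 x \<le> Y2 x"
        if "x \<in> space M" for x
        using True Y(2) that unfolding a_def[symmetric]
        by (auto simp: field_simps intro: mult_right_mono[of 1 a "Y2 x", simplified])
      show "0 \<le> 0 * Y2 x \<and> 0 \<le> 0 * Y2 x \<and> 0 * Y2 x \<le> Y2 x" if "x \<in> space M" for x
        using Y(2) that by auto
      show "1 / (LINT x:A|M. Y2 x) * (LINT x:A|M. Y2 x) + 0 * (integral\<^sup>L M Y2 - (LINT x:A|M. Y2 x)) = 1"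
        using True unfolding a_def[symmetric] by simp
    qed
    then show ?thesis using True unfolding a_def by simp
  next
    case False
    have Ea: "1 - a \<le> E - a" using Y(4) unfolding E_def by simp
    have "\<exists>Q\<in>Pset M (\<lambda>_. 0) Y2. measure Q A = 1 * a"
      unfolding a_def
    proof (rule attain[OF M Y(1) Y(3) A, where \<beta>="(1 - a) / (E - a)"])
      show "0 \<le> 1 * Y2 x \<and> 0 \<le> 1 * Y2 x \<and> 1 * Y2 x \<le> Y2 x" if "x \<in> space M" for x
        using Y(2) that by auto
      have b0: "0 \<le> (1 - a) / (E - a)" using False Ea by simp
      have b1: "(1 - a) / (E - a) \<le> 1" using False Ea by simp
      show "0 \<le> (1 - a) / (E - a) * Y2 x \<and> 0 \<le> (1 - a) / (E - a) * Y2 x \<and> (1 - a) / (E - a) * Y2 x \<le> Y2 x"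
        if "x \<in> space M" for x
      proof -
        have gen: "0 \<le> c * y \<and> c * y \<le> y" if "0 \<le> c" "c \<le> 1" "0 \<le> (y::real)" for c y
          using that by (simp add: mult_left_le_one_le)
        show ?thesis using gen[OF b0 b1, of "Y2 x"] Y(2) that by auto
      qed
      show "1 * (LINT x:A|M. Y2 x) + (1 - a) / (E - a) * (integral\<^sup>L M Y2 - (LINT x:A|M. Y2 x)) = 1"
        using False Ea unfolding a_def[symmetric] E_def[symmetric] by simp
    qed
    then show ?thesis using False unfolding a_def by simp
  qed
qed

lemma max_ii:
  assumes M: "prob_space M" and k: "0 \<le> k1" "k1 < 1" "1 < k2" and A: "A \<in> sets M"
  shows "(\<forall>Q\<in>Pset M (\<lambda>_. k1) (\<lambda>_. k2). measure Q A \<le> gfun k1 k2 (measure M A)) \<and>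
         (\<exists>Q\<in>Pset M (\<lambda>_. k1) (\<lambda>_. k2). measure Q A = gfun k1 k2 (measure M A))"
proof
  interpret prob_space M by fact
  define p where "p = measure M A"
  have p01: "0 \<le> p" "p \<le> 1" unfolding p_def by auto
  have C: "space M - A \<in> sets M" using A by auto
  have pC: "measure M (space M - A) = 1 - p" unfolding p_def using A by (simp add: prob_compl)
  show "\<forall>Q\<in>Pset M (\<lambda>_. k1) (\<lambda>_. k2). measure Q A \<le> gfun k1 k2 (measure M A)"
  proof
    fix Q assume Q: "Q \<in> Pset M (\<lambda>_. k1) (\<lambda>_. k2)"
    interpret Q: prob_space Q using Q by (auto simp: Pset_def)
    have sQ: "sets Q = sets M" using Q by (auto simp: Pset_def)
    have spQ: "space Q = space M" using sQ by (rule sets_eq_imp_space_eq)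
    have "emeasure Q A \<le> ennreal k2 * emeasure M A"
      using Pset_bounds(2)[OF M Q A] A by (simp add: nn_integral_cmult_indicator)
    then have "ennreal (measure Q A) \<le> ennreal (k2 * p)"
      using k p01 by (simp add: Q.emeasure_eq_measure emeasure_eq_measure p_def ennreal_mult)
    then have up: "measure Q A \<le> k2 * p" using k p01 by simp
    have "ennreal k1 * emeasure M (space M - A) \<le> emeasure Q (space M - A)"
      using Pset_bounds(1)[OF M Q C] C by (simp add: nn_integral_cmult_indicator)
    then have "ennreal (k1 * (1 - p)) \<le> ennreal (measure Q (space M - A))"
      using k p01 pC by (simp add: Q.emeasure_eq_measure emeasure_eq_measure ennreal_mult)
    then have "k1 * (1 - p) \<le> measure Q (space M - A)" by (simp add: ennreal_le_iff)
    moreover have "measure Q (space M - A) = 1 - measure Q A"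
      using Q.prob_compl[of A] A sQ spQ by simp
    ultimately have lo: "measure Q A \<le> k1 * p + 1 - k1" by (simp add: algebra_simps)
    show "measure Q A \<le> gfun k1 k2 (measure M A)"
      using up lo unfolding gfun_def p_def by simp
  qed
  have one: "(LINT x:A|M. (1::real)) = p" unfolding p_def set_lebesgue_integral_def using A by simp
  have E1: "integral\<^sup>L M (\<lambda>_. 1::real) = 1" by (simp add: prob_space)
  show "\<exists>Q\<in>Pset M (\<lambda>_. k1) (\<lambda>_. k2). measure Q A = gfun k1 k2 (measure M A)"
  proof (cases "k2 * p \<le> k1 * p + 1 - k1")
    case True
    have p1: "p < 1"
    proof (rule ccontr)
      assume "\<not> p < 1" then have "p = 1" using p01 by simp
      with True k show False by simp
    qed
    define c where "c = (1 - k2 * p) / (1 - p)"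
    have c1: "k1 \<le> c" unfolding c_def using p1 True by (simp add: field_simps)
    have c2: "c \<le> k2" unfolding c_def using p1 p01 k by (simp add: field_simps)
    have "\<exists>Q\<in>Pset M (\<lambda>_. k1) (\<lambda>_. k2). measure Q A = k2 * (LINT x:A|M. (1::real))"
    proof (rule attain[OF M _ _ A, where \<beta>=c])
      have tot: "k2 * p + c * (1 - p) = 1" unfolding c_def using p1 by (simp add: field_simps)
      show "k2 * (LINT x:A|M. (1::real)) + c * (integral\<^sup>L M (\<lambda>_. 1) - (LINT x:A|M. (1::real))) = 1"
        using tot by (simp add: one prob_space)
    qed (use k c1 c2 in auto)
    then show ?thesis using True unfolding one gfun_def p_def by simp
  next
    case False
    have p0: "0 < p"
    proof (rule ccontr)
      assume "\<not> 0 < p" then have "p = 0" using p01 by simp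
      with False k show False by simp
    qed
    define c where "c = (k1 * p + 1 - k1) / p"
    have c1: "k1 \<le> c" unfolding c_def using p0 k by (simp add: field_simps)
    have c2: "c \<le> k2" unfolding c_def using p0 False by (simp add: field_simps)
    have "\<exists>Q\<in>Pset M (\<lambda>_. k1) (\<lambda>_. k2). measure Q A = c * (LINT x:A|M. (1::real))"
    proof (rule attain[OF M _ _ A, where \<beta>=k1])
      have tot: "c * p + k1 * (1 - p) = 1" unfolding c_def using p0 by (simp add: field_simps)
      show "c * (LINT x:A|M. (1::real)) + k1 * (integral\<^sup>L M (\<lambda>_. 1) - (LINT x:A|M. (1::real))) = 1"
        using tot by (simp add: one prob_space)
    qed (use k c1 c2 in auto)
    then show ?thesis using False p0 unfolding one gfun_def p_def c_def by simp
  qed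
qed

lemma gfun_mono: "0 \<le> k1 \<Longrightarrow> 0 \<le> k2 \<Longrightarrow> u \<le> v \<Longrightarrow> gfun k1 k2 u \<le> gfun k1 k2 v"
  unfolding gfun_def by (auto simp: min_def intro: mult_left_mono) (smt (verit) mult_left_mono)+

lemma gfun_strict:
  assumes "0 \<le> k1" "0 < k2" "u < v" "gfun k1 k2 v < 1"
  shows "gfun k1 k2 u < gfun k1 k2 v"
proof (cases "k2 * v \<le> k1 * v + 1 - k1")
  case True
  then have "gfun k1 k2 v = k2 * v" by (simp add: gfun_def)
  moreover have "gfun k1 k2 u \<le> k2 * u" by (simp add: gfun_def)
  moreover have "k2 * u < k2 * v" using assms by simp
  ultimately show ?thesis by linarith
next
  case False
  then have gv: "gfun k1 k2 v = k1 * v + 1 - k1" by (simp add: gfun_def)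
  with assms have "0 < k1" by (cases "k1 = 0") auto
  moreover have "gfun k1 k2 u \<le> k1 * u + 1 - k1" by (simp add: gfun_def)
  ultimately show ?thesis using gv assms by (smt (verit) mult_strict_left_mono)
qed

lemma ginv_prop:
  assumes k: "0 \<le> k1" "k1 < 1" "1 < k2" and y: "0 < y" "y < 1"
  shows "0 \<le> ginv k1 k2 y \<and> ginv k1 k2 y \<le> 1 \<and> gfun k1 k2 (ginv k1 k2 y) = y"
proof -
  have "\<exists>x\<ge>0. x \<le> 1 \<and> gfun k1 k2 x = y"
  proof (rule IVT')
    show "gfun k1 k2 0 \<le> y" using k y by (simp add: gfun_def)
    show "y \<le> gfun k1 k2 1" using k y by (simp add: gfun_def)
    show "continuous_on {0..1} (gfun k1 k2)" unfolding gfun_def by (intro continuous_intros)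
  qed simp
  then obtain x where x: "0 \<le> x" "x \<le> 1" "gfun k1 k2 x = y" by blast
  have "ginv k1 k2 y = x"
    unfolding ginv_def
  proof (rule the_equality)
    show "0 \<le> x \<and> x \<le> 1 \<and> gfun k1 k2 x < 1 \<and> gfun k1 k2 x = y" using x y by simp
    fix x' assume x': "0 \<le> x' \<and> x' \<le> 1 \<and> gfun k1 k2 x' < 1 \<and> gfun k1 k2 x' = y"
    show "x' = x"
    proof (rule ccontr)
      assume "x' \<noteq> x"
      then consider "x' < x" | "x < x'" by linarith
      then show False
      proof cases
        case 1 then show False using gfun_strict[OF k(1) _ 1, of k2] x x' y k by simp
      next
        case 2 then show False using gfun_strict[OF k(1) _ 2, of k2] x x' y k by simp
      qed
    qed
  qed
  then show ?thesis using x by simp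
qed

lemma gfun_ginv_le:
  assumes k: "0 \<le> k1" "k1 < 1" "1 < k2" and y: "0 < y" "y < 1" and p: "0 \<le> p" "p \<le> 1"
  shows "gfun k1 k2 p \<le> y \<longleftrightarrow> p \<le> ginv k1 k2 y"
proof -
  define z where "z = ginv k1 k2 y"
  have z: "0 \<le> z" "z \<le> 1" "gfun k1 k2 z = y" using ginv_prop[OF k y] unfolding z_def by auto
  show ?thesis unfolding z_def[symmetric]
  proof
    assume gp: "gfun k1 k2 p \<le> y"
    show "p \<le> z"
    proof (rule ccontr)
      assume "\<not> p \<le> z"
      then have "z < p" by simp
      moreover have "gfun k1 k2 p < 1" using gp y by simp
      ultimately have "gfun k1 k2 z < gfun k1 k2 p" using k by (intro gfun_strict) auto
      then show False using gp z by simp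
    qed
  next
    assume "p \<le> z"
    then show "gfun k1 k2 p \<le> y" using gfun_mono[of k1 k2 p z] k z by simp
  qed
qed

theorem mainTheorem9:
  fixes M :: "'a measure" and L :: "real \<Rightarrow> real"
  assumes "prob_space M" and "atomless M" and "L \<in> H_I"
  shows
   "(\<forall>Y2. Y2 \<in> borel_measurable M \<and> (\<forall>x\<in>space M. 0 \<le> Y2 x) \<and> integrable M Y2
        \<and> 1 < integral\<^sup>L M Y2 \<longrightarrow>
      (\<forall>A\<in>sets M. setsup (Pset M (\<lambda>_. 0) Y2) A = min 1 (LINT x:A|M. Y2 x)) \<and>
      (\<forall>X\<in>borel_measurable M.
         (SUP Q\<in>Pset M (\<lambda>_. 0) Y2. LVaR (space M) (measure Q) L X)
           = LVaR (space M) (setsup (Pset M (\<lambda>_. 0) Y2)) L X))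
    \<and>
    (\<forall>k1 k2::real. 0 \<le> k1 \<and> k1 < 1 \<and> 1 < k2 \<longrightarrow>
      (\<forall>A\<in>sets M. setsup (Pset M (\<lambda>_. k1) (\<lambda>_. k2)) A = gfun k1 k2 (measure M A)) \<and>
      (\<forall>X\<in>borel_measurable M.
         (SUP Q\<in>Pset M (\<lambda>_. k1) (\<lambda>_. k2). LVaR (space M) (measure Q) L X)
           = LVaR (space M) (measure M) (ginv k1 k2 \<circ> L) X))"
proof (intro conjI allI impI ballI)
  interpret prob_space M by fact
  have Lm: "mono L" and L01: "\<And>x. 0 < L x \<and> L x < 1" using assms(3) by (auto simp: H_I_def)
  fix Y2 :: "'a \<Rightarrow> real" assume Y: "Y2 \<in> borel_measurable M \<and> (\<forall>x\<in>space M. 0 \<le> Y2 x) \<and> integrable M Y2 \<and> 1 < integral\<^sup>L M Y2"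
  have mx: "\<And>A. A \<in> sets M \<Longrightarrow> (\<forall>Q\<in>Pset M (\<lambda>_. 0) Y2. measure Q A \<le> min 1 (LINT x:A|M. Y2 x)) \<and>
         (\<exists>Q\<in>Pset M (\<lambda>_. 0) Y2. measure Q A = min 1 (LINT x:A|M. Y2 x))"
    using max_i[OF assms(1)] Y by blast
  show "setsup (Pset M (\<lambda>_. 0) Y2) A = min 1 (LINT x:A|M. Y2 x)" if "A \<in> sets M" for A
    using mx[OF that] by (intro setsup_max) auto
  show "(SUP Q\<in>Pset M (\<lambda>_. 0) Y2. LVaR (space M) (measure Q) L X) = LVaR (space M) (setsup (Pset M (\<lambda>_. 0) Y2)) L X"
    if "X \<in> borel_measurable M" for X
    by (rule LVaR_Pset[OF assms(1) mx that Lm])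
next
  interpret prob_space M by fact
  have Lm: "mono L" and L01: "\<And>x. 0 < L x \<and> L x < 1" using assms(3) by (auto simp: H_I_def)
  fix k1 k2 :: real assume k: "0 \<le> k1 \<and> k1 < 1 \<and> 1 < k2"
  have mx: "\<And>A. A \<in> sets M \<Longrightarrow> (\<forall>Q\<in>Pset M (\<lambda>_. k1) (\<lambda>_. k2). measure Q A \<le> gfun k1 k2 (measure M A)) \<and>
         (\<exists>Q\<in>Pset M (\<lambda>_. k1) (\<lambda>_. k2). measure Q A = gfun k1 k2 (measure M A))"
    using max_ii[OF assms(1)] k by blast
  have ss: "setsup (Pset M (\<lambda>_. k1) (\<lambda>_. k2)) A = gfun k1 k2 (measure M A)" if "A \<in> sets M" for A
    using mx[OF that] by (intro setsup_max) auto
  then show "setsup (Pset M (\<lambda>_. k1) (\<lambda>_. k2)) A = gfun k1 k2 (measure M A)" if "A \<in> sets M" for A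
    using that by blast
  fix X :: "'a \<Rightarrow> real" assume X: "X \<in> borel_measurable M"
  have "(SUP Q\<in>Pset M (\<lambda>_. k1) (\<lambda>_. k2). LVaR (space M) (measure Q) L X)
      = LVaR (space M) (setsup (Pset M (\<lambda>_. k1) (\<lambda>_. k2))) L X"
    by (rule LVaR_Pset[OF assms(1) mx X Lm])
  also have "\<dots> = LVaR (space M) (measure M) (ginv k1 k2 \<circ> L) X"
    unfolding LVaR_def
  proof (rule arg_cong[where f=Inf], rule Collect_cong, rule ex_cong1)
    fix z x
    have S: "{\<omega>\<in>space M. X \<omega> > x} \<in> sets M" using X by measurable
    have "setsup (Pset M (\<lambda>_. k1) (\<lambda>_. k2)) {\<omega>\<in>space M. X \<omega> > x} \<le> L x
        \<longleftrightarrow> measure M {\<omega>\<in>space M. X \<omega> > x} \<le> (ginv k1 k2 \<circ> L) x"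
      unfolding ss[OF S] o_def using k L01[of x] by (intro gfun_ginv_le) auto
    then show "(z = ereal x \<and> setsup (Pset M (\<lambda>_. k1) (\<lambda>_. k2)) {\<omega>\<in>space M. x < X \<omega>} \<le> L x) =
        (z = ereal x \<and> measure M {\<omega>\<in>space M. x < X \<omega>} \<le> (ginv k1 k2 \<circ> L) x)" by simp
  qed
  finally show "(SUP Q\<in>Pset M (\<lambda>_. k1) (\<lambda>_. k2). LVaR (space M) (measure Q) L X)
      = LVaR (space M) (measure M) (ginv k1 k2 \<circ> L) X" .
qed

end
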